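(* Suppose every selected context vector takes one of finitely many values $x_{(1)},\dots,x_{(N)}\in\mathbb R^d$, and let $A_t=I_d+\sum_{\tau=1}^tx_{\tau,a_\tau}x_{\tau,a_\tau}^\top$ (as in the AdaLinUCB algorithm). For $n=1,\dots,N$ let $m_{t,(n)}=\sum_{\tau=1}^t\mathbb 1\{x_{\tau,a_\tau}=x_{(n)}\}$. Then for every $t\ge1$ and every $n=1,\dots,N$, $$\|x_{(n)}\|_{A_{t-1}^{-1}}\le\sqrt{\frac{d}{m_{t-1,(n)}}}.$$
   Context: For a positive definite matrix $A$, $\|x\|_A=\sqrt{x^\top Ax}$. $x_{\tau,a_\tau}$ is the context vector of the arm selected at slot $\tau$; $A_0=I_d$. *)

theory Defs
  imports "HOL-Analysis.Analysis"
begin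

definition outer :: "real^'d \<Rightarrow> real^'d \<Rightarrow> real^'d^'d" where
  "outer x y = (\<chi> i j. x $ i * y $ j)"

definition wnorm :: "real^'d^'d \<Rightarrow> real^'d \<Rightarrow> real" where
  "wnorm A x = sqrt (x \<bullet> (A *v x))"

text \<open>Design matrix A_t = I_d + sum_{tau=1}^t x_tau x_tau^T, where xs tau is the
  context vector of the arm selected at slot tau.\<close>
definition design :: "(nat \<Rightarrow> real^'d) \<Rightarrow> nat \<Rightarrow> real^'d^'d" where
  "design xs t = mat 1 + (\<Sum>\<tau>=1..t. outer (xs \<tau>) (xs \<tau>))"

definition count_sel :: "(nat \<Rightarrow> real^'d) \<Rightarrow> nat \<Rightarrow> real^'d \<Rightarrow> nat" where
  "count_sel xs t v = card {\<tau> \<in> {1..t}. xs \<tau> = v}"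

end

theory Submission
  imports Defs
begin

lemma outer_mulv: "outer x x *v y = (x \<bullet> y) *\<^sub>R x"
  by (simp add: vec_eq_iff outer_def matrix_vector_mult_def inner_vec_def
      sum_distrib_left mult.commute mult.left_commute)

lemma sum_mulv: "finite S \<Longrightarrow> (sum f S) *v y = (\<Sum>i\<in>S. f i *v y)"
  by (induction S rule: finite_induct) (auto simp: matrix_vector_mult_add_rdistrib)

lemma design_mulv: "design xs t *v y = y + (\<Sum>\<tau>=1..t. (xs \<tau> \<bullet> y) *\<^sub>R xs \<tau>)"
  by (simp add: design_def matrix_vector_mult_add_rdistrib sum_mulv outer_mulv)

lemma design_quad: "y \<bullet> (design xs t *v y) = y \<bullet> y + (\<Sum>\<tau>=1..t. (xs \<tau> \<bullet> y)^2)"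
  by (simp add: design_mulv inner_add_right inner_sum_right power2_eq_square inner_commute)

lemma design_inv: "design xs t ** matrix_inv (design xs t) = mat 1"
proof -
  let ?A = "design xs t"
  have "\<forall>x. ?A *v x = 0 \<longrightarrow> x = 0"
  proof (intro allI impI)
    fix x assume "?A *v x = 0"
    hence "x \<bullet> (?A *v x) = 0" by simp
    hence "x \<bullet> x + (\<Sum>\<tau>=1..t. (xs \<tau> \<bullet> x)^2) = 0" by (simp add: design_quad)
    moreover have "(\<Sum>\<tau>=1..t. (xs \<tau> \<bullet> x)^2) \<ge> 0" by (simp add: sum_nonneg)
    ultimately have "x \<bullet> x = 0" by (smt (verit) inner_ge_zero)
    thus "x = 0" by simp
  qed
  then obtain B where "B ** ?A = mat 1" using matrix_left_invertible_ker by blast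
  hence "?A ** B = mat 1 \<and> B ** ?A = mat 1" using matrix_left_right_inverse by blast
  hence "?A ** matrix_inv ?A = mat 1 \<and> matrix_inv ?A ** ?A = mat 1"
    unfolding matrix_inv_def by (rule someI)
  thus ?thesis by blast
qed

theorem lemma4:
  fixes xs :: "nat \<Rightarrow> real^'d" and xval :: "nat \<Rightarrow> real^'d" and N :: nat
    and t n :: nat
  assumes finite_vals: "\<And>\<tau>. \<tau> \<ge> 1 \<Longrightarrow> \<exists>k\<in>{1..N}. xs \<tau> = xval k"
    and t: "t \<ge> 1"
    and n: "n \<in> {1..N}"
    and m_pos: "count_sel xs (t - 1) (xval n) > 0"
  shows "wnorm (matrix_inv (design xs (t - 1))) (xval n)
           \<le> sqrt (real CARD('d) / real (count_sel xs (t - 1) (xval n)))"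
proof -
  let ?A = "design xs (t - 1)"
  let ?v = "xval n"
  define y where "y = matrix_inv ?A *v ?v"
  define m where "m = count_sel xs (t - 1) ?v"
  define s where "s = ?v \<bullet> y"
  have Ay: "?A *v y = ?v" unfolding y_def
    by (simp add: matrix_vector_mul_assoc design_inv)
  have s_eq: "s = y \<bullet> y + (\<Sum>\<tau>=1..t-1. (xs \<tau> \<bullet> y)^2)"
    unfolding s_def by (metis Ay design_quad inner_commute)
  let ?S = "{\<tau> \<in> {1..t-1}. xs \<tau> = ?v}"
  have "(\<Sum>\<tau>\<in>?S. (xs \<tau> \<bullet> y)^2) \<le> (\<Sum>\<tau>=1..t-1. (xs \<tau> \<bullet> y)^2)"
    by (rule sum_mono2) auto
  moreover have "(\<Sum>\<tau>\<in>?S. (xs \<tau> \<bullet> y)^2) = real m * s^2"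
    by (simp add: m_def count_sel_def s_def inner_commute)
  ultimately have ms: "real m * s^2 \<le> s" using s_eq by (smt (verit) inner_ge_zero)
  have s0: "s \<ge> 0" using s_eq by (smt (verit) inner_ge_zero sum_nonneg zero_le_power2)
  have mpos: "real m > 0" using m_pos m_def by simp
  have "s \<le> 1 / real m"
  proof (cases "s = 0")
    case False
    hence "s > 0" using s0 by simp
    hence "real m * s \<le> 1" using ms by (simp add: power2_eq_square)
    thus ?thesis using mpos by (simp add: field_simps)
  qed (use mpos in simp)
  also have "\<dots> \<le> real CARD('d) / real m"
    using mpos by (intro divide_right_mono) auto
  finally have "s \<le> real CARD('d) / real m" .
  thus ?thesis unfolding wnorm_def m_def s_def y_def by simp
qed

end
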